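(* Let $W$ be a complex vector space of complex dimension $m \geq 2$ and $G=\mathrm{SL}(W,\mathbb{C})$. Let $f:W \to \mathbb{R}$ be a continuous function such that for each $g \in G$ the function $f \circ g-f$ is a (real) linear function on $W$. Then $f$ is affine. *)

theory Defs
  imports "HOL-Analysis.Analysis"
begin

end

theory Submission
  imports Defs
begin
definition transv :: "'m::finite \<Rightarrow> 'm \<Rightarrow> complex \<Rightarrow> complex^'m^'m" where
 "transv k l c = (\<chi> r. if r = k then row k (mat 1) + c *s row l (mat 1) else row r (mat 1))"

lemma transv_det: fixes k l :: "'m::finite" shows "k \<noteq> l \<Longrightarrow> det (transv k l c) = 1"
  unfolding transv_def using det_row_operation[of k l "mat 1 :: complex^'m^'m" c] by simp

lemma transv_mult: "k \<noteq> l \<Longrightarrow> transv k l c *v x = (\<chi> r. if r = k then x$k + c * x$l else x$r)"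
  unfolding transv_def
  by (auto simp: vec_eq_iff matrix_vector_mult_def row_def mat_def distrib_right sum.distrib
      if_distrib[where f="\<lambda>u. u * _"] if_distrib[where f="\<lambda>u. c * u"] cong: if_cong)

lemma det_mat: "det (mat c :: complex^'m::finite^'m) = c ^ CARD('m)"
  by (simp add: det_diagonal mat_def)

lemma mat_mult: "mat c *v (x::complex^'m::finite) = c *s x"
  by (simp add: vec_eq_iff matrix_vector_mult_def mat_def if_distrib[where f="\<lambda>u. u * _"] if_distrib[where f="\<lambda>u. c * u"] cong: if_cong)

lemma scal_lin: "linear (\<lambda>y::complex^'m::finite. w *s y)"
  by (rule linearI) (auto simp: vec_eq_iff scaleR_conv_of_real algebra_simps)

lemma ofreal_s: "(of_real r :: complex) *s (e::complex^'m::finite) = r *\<^sub>R e"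
  by (simp add: vec_eq_iff) (simp add: scaleR_conv_of_real)

lemma root_unity:
  assumes "CARD('m::finite) \<ge> 2"
  shows "\<exists>\<zeta>::complex. \<zeta> ^ CARD('m) = 1 \<and> \<zeta> \<noteq> 1"
proof -
  let ?n = "CARD('m)"
  define \<zeta> where "\<zeta> = cis (2*pi / real ?n)"
  have "\<zeta> ^ ?n = cis (real ?n * (2*pi/real ?n))" unfolding \<zeta>_def by (rule Complex.DeMoivre)
  also have "\<dots> = cis (2*pi)" using assms by (intro arg_cong[where f=cis]) simp
  also have "\<dots> = 1" by simp
  finally have 1: "\<zeta> ^ ?n = 1" .
  have "cos (2*pi/real ?n) < cos 0"
  proof (rule cos_monotone_0_pi)
    show "0 < 2*pi/real ?n" using assms by simp
    have "2*pi/real ?n \<le> 2*pi/2" using assms by (intro divide_left_mono) auto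
    then show "2*pi/real ?n \<le> pi" by simp
  qed simp
  then have "Re \<zeta> \<noteq> 1" unfolding \<zeta>_def by simp
  then have "\<zeta> \<noteq> 1" by auto
  with 1 show ?thesis by blast
qed


lemma upd_multi:
  fixes h :: "complex^'m::finite \<Rightarrow> real"
  assumes single: "\<And>x k a. k \<noteq> l \<Longrightarrow> x$l \<noteq> 0 \<Longrightarrow> h (\<chi> r. if r = k then a else x$r) = h x"
  assumes "finite K" "l \<notin> K" "x$l \<noteq> 0"
  shows "h (\<chi> r. if r \<in> K then a r else x$r) = h x"
  using assms(2-)
proof (induction K rule: finite_induct)
  case empty then show ?case by simp
next
  case (insert k K)
  let ?y = "(\<chi> r. if r \<in> K then a r else x$r)"
  have "(\<chi> r. if r \<in> insert k K then a r else x$r) = (\<chi> r. if r = k then a k else ?y$r)"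
    by (auto simp: vec_eq_iff)
  moreover have "h (\<chi> r. if r = k then a k else ?y$r) = h ?y"
    using insert by (intro single) auto
  ultimately show ?case using insert by simp
qed

theorem lemma3p1:
  fixes f :: "complex ^ 'm \<Rightarrow> real"
  assumes dim: "CARD('m) \<ge> 2"
    and cont: "continuous_on UNIV f"
    and lin: "\<And>g :: complex ^ 'm ^ 'm. det g = 1 \<Longrightarrow> linear (\<lambda>x. f (g *v x) - f x)"
  shows "\<exists>l c. linear l \<and> (\<forall>x. f x = l x + c)"
proof -
  obtain \<zeta> :: complex where z1: "\<zeta> ^ CARD('m) = 1" and zne: "\<zeta> \<noteq> 1"
    using root_unity[OF dim] by blast
  define w where "w = 1 / (\<zeta> - 1)"
  have wz: "w * \<zeta> - w = 1"
  proof -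
    have "w * \<zeta> - w = w * (\<zeta> - 1)" by (simp add: algebra_simps)
    also have "\<dots> = 1" using zne unfolding w_def by simp
    finally show ?thesis .
  qed
  define Lz where "Lz = (\<lambda>x. f (\<zeta> *s x) - f x)"
  have Lz_lin: "linear Lz"
    using lin[of "mat \<zeta>"] z1 unfolding Lz_def by (simp add: det_mat mat_mult)
  define l where "l = (\<lambda>y. Lz (w *s y))"
  have l_lin: "linear l" unfolding l_def
    using linear_compose[OF scal_lin Lz_lin] by (simp add: o_def)
  define h where "h = (\<lambda>x. f x - l x)"
  have hz: "h (\<zeta> *s x) = h x" for x
  proof -
    have e: "w *s (\<zeta> *s x) - w *s x = x"
      using wz by (simp add: vec_eq_iff algebra_simps)
    have "l (\<zeta> *s x) - l x = Lz (w *s (\<zeta> *s x) - w *s x)"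
      unfolding l_def using linear_diff[OF Lz_lin] by simp
    also have "\<dots> = Lz x" using e by simp
    finally show ?thesis unfolding h_def Lz_def by simp
  qed
  have hg: "h (g *v x) = h x" if dg: "det g = 1" for g x
  proof -
    define M where "M = (\<lambda>x. h (g *v x) - h x)"
    have Lg: "linear (\<lambda>x. f (g *v x) - f x)" using lin dg by blast
    have Mdiff: "M (a - b) = M a - M b" for a b
    proof -
      have "M (a - b) = (f (g *v (a - b)) - f (a - b)) - l (g *v a - g *v b) + l (a - b)"
        unfolding M_def h_def by (simp add: matrix_vector_mult_diff_distrib)
      also have "\<dots> = ((f (g *v a) - f a) - (f (g *v b) - f b)) - (l (g *v a) - l (g *v b)) + (l a - l b)"
        using linear_diff[OF Lg, of a b] linear_diff[OF l_lin] by simp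
      finally show ?thesis unfolding M_def h_def by simp
    qed
    have Mz: "M (\<zeta> *s u) = M u" for u
      unfolding M_def by (simp add: vector_scalar_commute hz)
    have e: "\<zeta> *s (w *s x) - w *s x = x"
      using wz by (simp add: vec_eq_iff algebra_simps)
    have "M x = M (\<zeta> *s (w *s x) - w *s x)" using e by simp
    also have "\<dots> = 0" by (simp only: Mdiff Mz diff_self)
    finally show ?thesis unfolding M_def by simp
  qed
  have single: "h (\<chi> r. if r = k then a else x$r) = h x" if "k \<noteq> l'" "x$l' \<noteq> 0" for x k l' a
  proof -
    define c where "c = (a - x$k) / x$l'"
    have "transv k l' c *v x = (\<chi> r. if r = k then a else x$r)"
      using that by (simp add: transv_mult c_def vec_eq_iff)
    then show ?thesis using hg[OF transv_det[OF that(1), of c], of x] by simp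
  qed
  have hcont: "continuous_on UNIV h"
  proof -
    have "continuous_on UNIV (\<lambda>y. f (\<zeta> *s (w *s y)) - f (w *s y))"
    proof (intro continuous_on_diff continuous_on_compose2[OF cont])
      show "continuous_on UNIV (\<lambda>y::complex^'m. \<zeta> *s (w *s y))"
        using linear_continuous_on[OF linear_conv_bounded_linear[THEN iffD1, OF linear_compose[OF scal_lin scal_lin]]]
        by (simp add: o_def)
      show "continuous_on UNIV (\<lambda>y::complex^'m. (w *s y))"
        using linear_continuous_on[OF linear_conv_bounded_linear[THEN iffD1, OF scal_lin]] by blast
    qed auto
    from continuous_on_diff[OF cont this] show ?thesis unfolding h_def l_def Lz_def .
  qed
  have hconst: "h x = h 0" for x
  proof (cases "x = 0")
    case True then show ?thesis by simp
  next
    case False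
    then obtain j where xj: "x$j \<noteq> 0" by (auto simp: vec_eq_iff)
    obtain i where ij: "i \<noteq> j"
    proof -
      have "\<not> (UNIV::'m set) \<subseteq> {j}"
      proof
        assume "(UNIV::'m set) \<subseteq> {j}"
        then have "CARD('m) \<le> card {j}" by (intro card_mono) auto
        with dim show False by simp
      qed
      then show ?thesis using that by auto
    qed
    define e where "e = (\<chi> r. if r = i \<or> r = j then (1::complex) else 0)"
    have key: "h x = h (\<epsilon> *s e)" if "\<epsilon> \<noteq> 0" for \<epsilon>
    proof -
      define y where "y = (\<chi> r. if r \<in> UNIV - {j} then (if r = i then 1 else 0) else x$r)"
      have 1: "h y = h x" unfolding y_def
        by (rule upd_multi[OF single]) (use xj in auto)
      define y' where "y' = (\<chi> r. if r = j then \<epsilon> else y$r)"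
      have 2: "h y' = h y" unfolding y'_def
        by (rule single[of j i]) (use ij in \<open>auto simp: y_def\<close>)
      define y'' where "y'' = (\<chi> r. if r = i then \<epsilon> else y'$r)"
      have 3: "h y'' = h y'" unfolding y''_def
        by (rule single[of i j]) (use ij that in \<open>auto simp: y'_def\<close>)
      have "y'' = \<epsilon> *s e"
        using ij by (auto simp: vec_eq_iff y''_def y'_def y_def e_def)
      with 1 2 3 show ?thesis by simp
    qed
    have lim: "(\<lambda>n. inverse (real (Suc n)) *\<^sub>R e) \<longlonglongrightarrow> 0 *\<^sub>R e"
      by (intro tendsto_scaleR LIMSEQ_inverse_real_of_nat tendsto_const)
    have "(\<lambda>n. h (inverse (real (Suc n)) *\<^sub>R e)) \<longlonglongrightarrow> h (0 *\<^sub>R e)"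
      by (rule continuous_on_tendsto_compose[OF hcont lim]) auto
    moreover have "h (inverse (real (Suc n)) *\<^sub>R e) = h x" for n
    proof -
      have "(of_real (inverse (real (Suc n))) :: complex) \<noteq> 0" by (simp del: of_nat_Suc)
      from key[OF this] show ?thesis by (simp only: ofreal_s)
    qed
    ultimately have "(\<lambda>n. h x) \<longlonglongrightarrow> h 0" by simp
    then show ?thesis by (simp add: LIMSEQ_const_iff)
  qed
  show ?thesis
  proof (intro exI conjI allI)
    show "linear l" by (rule l_lin)
    show "f x = l x + h 0" for x using hconst[of x] unfolding h_def by simp
  qed
qed

end
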